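(* Let $\mathbf{a}\in\mathbb{C}^{2N}$ be an eigenvector of $\mathbf{D}$ with eigenvalue $\mu\in\mathbb{C}$. Then $\bm{\Gamma}\mathbf{a}^{*}$ is an eigenvector of $\mathbf{D}$ with eigenvalue $-\mu^{*}$. Furthermore, if $\mathbf{a},\mathbf{b}$ are eigenvectors of $\mathbf{D}$ and $\mathbf{a}'=\bm{\Gamma}\mathbf{a}^{*}$, $\mathbf{b}'=\bm{\Gamma}\mathbf{b}^{*}$, then $$\langle \mathbf{a},\mathbf{b}\rangle^{*}=-\langle \mathbf{a}',\mathbf{b}'\rangle,\qquad \langle \mathbf{a},\mathbf{b}'\rangle=-\langle \mathbf{b},\mathbf{a}'\rangle .$$
   Context: Fix an integer $N\ge 1$, real numbers $v$ with $|v|<1$, $L>0$, $L_{\star}\ge 0$, an integer $M\ge 1$ and real coefficients $c_{1}=1,c_{2},\dots,c_{M}$. Let $F(k)=\sum_{i=1}^{M}(-1)^{i-1}c_{i}L_{\star}^{2i-2}k^{2i-1}$ and $k_{n}=n\pi/L$, and assume $F(k_{n})^{2}\neq v^{2}k_{n}^{2}$ for $n=1,\dots,N$. Put $u_{n}=\sqrt{|F(k_{n})^{2}-v^{2}k_{n}^{2}|}/k_{n}>0$, and $\varepsilon_{n}=1$ if $F(k_{n})^{2}-v^{2}k_{n}^{2}>0$, $\varepsilon_{n}=0$ otherwise. Define $N\times N$ matrices $\bm\sigma,\bm\rho,\bm\xi$ by $\sigma_{nn}=0$, $\sigma_{nm}=\dfrac{2iv\sqrt{nm}\,[1-(-1)^{n+m}]}{\pi\sqrt{u_{n}u_{m}}\,(m^{2}-n^{2})}$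 for $n\neq m$, $\bm\rho=\mathrm{diag}(n u_{n}\varepsilon_{n})$, $\bm\xi=\mathrm{diag}(-n u_{n}(1-\varepsilon_{n}))$. With $\mathbf{I}$ the $N\times N$ identity, define the $2N\times 2N$ matrices $\bm{\Sigma}=\begin{pmatrix}\mathbf{I}&\mathbf{0}\\ \mathbf{0}&-\mathbf{I}\end{pmatrix}$, $\bm{\Gamma}=\begin{pmatrix}\mathbf{0}&\mathbf{I}\\ \mathbf{I}&\mathbf{0}\end{pmatrix}$, $\mathbf{R}=\bm{\Sigma}-\begin{pmatrix}\bm\sigma&\bm\sigma\\ \bm\sigma&\bm\sigma\end{pmatrix}$, $\bm{\Omega}=\begin{pmatrix}\bm\rho&\bm\xi\\ \bm\xi&\bm\rho\end{pmatrix}$. Standing assumption: $\mathbf{R}$ is invertible. Let $\mathbf{D}=\mathbf{R}^{-1}\bm{\Omega}$. Here ${}^{*}$ denotes entrywise complex conjugation, ${}^{\mathrm{H}}$ the conjugate transpose, and the $\mathbf{R}$-inner product is $\langle\mathbf{x},\mathbf{y}\rangle=\mathbf{x}^{\mathrm{H}}\mathbf{R}\mathbf{y}$. *)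

theory Defs
  imports "Jordan_Normal_Form.Char_Poly"
begin

definition Fdisp :: "nat \<Rightarrow> (nat \<Rightarrow> real) \<Rightarrow> real \<Rightarrow> real \<Rightarrow> real" where
  "Fdisp M c Ls k = (\<Sum>i = 1..M. (-1) ^ (i - 1) * c i * Ls ^ (2 * i - 2) * k ^ (2 * i - 1))"

definition kn :: "real \<Rightarrow> nat \<Rightarrow> real" where
  "kn L n = real n * pi / L"

definition disc :: "nat \<Rightarrow> (nat \<Rightarrow> real) \<Rightarrow> real \<Rightarrow> real \<Rightarrow> real \<Rightarrow> nat \<Rightarrow> real" where
  "disc M c Ls v L n = (Fdisp M c Ls (kn L n))\<^sup>2 - v\<^sup>2 * (kn L n)\<^sup>2"

definition uu :: "nat \<Rightarrow> (nat \<Rightarrow> real) \<Rightarrow> real \<Rightarrow> real \<Rightarrow> real \<Rightarrow> nat \<Rightarrow> real" where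
  "uu M c Ls v L n = sqrt \<bar>disc M c Ls v L n\<bar> / kn L n"

definition epsn :: "nat \<Rightarrow> (nat \<Rightarrow> real) \<Rightarrow> real \<Rightarrow> real \<Rightarrow> real \<Rightarrow> nat \<Rightarrow> real" where
  "epsn M c Ls v L n = (if disc M c Ls v L n > 0 then 1 else 0)"

text \<open>N x N matrices; the 0-based index i corresponds to the paper's index n = i+1.\<close>
definition sigma_mat :: "nat \<Rightarrow> nat \<Rightarrow> (nat \<Rightarrow> real) \<Rightarrow> real \<Rightarrow> real \<Rightarrow> real \<Rightarrow> complex mat" where
  "sigma_mat N M c Ls v L = mat N N (\<lambda>(i, j). let n = i + 1; m = j + 1 in
     if n = m then 0 else
     \<i> * complex_of_real (2 * v * sqrt (real n * real m) * (1 - (-1) ^ (n + m))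
        / (pi * sqrt (uu M c Ls v L n * uu M c Ls v L m) * (real m ^ 2 - real n ^ 2))))"

definition rho_mat :: "nat \<Rightarrow> nat \<Rightarrow> (nat \<Rightarrow> real) \<Rightarrow> real \<Rightarrow> real \<Rightarrow> real \<Rightarrow> complex mat" where
  "rho_mat N M c Ls v L = mat N N (\<lambda>(i, j). if i = j then
     complex_of_real (real (i + 1) * uu M c Ls v L (i + 1) * epsn M c Ls v L (i + 1)) else 0)"

definition xi_mat :: "nat \<Rightarrow> nat \<Rightarrow> (nat \<Rightarrow> real) \<Rightarrow> real \<Rightarrow> real \<Rightarrow> real \<Rightarrow> complex mat" where
  "xi_mat N M c Ls v L = mat N N (\<lambda>(i, j). if i = j then
     complex_of_real (- real (i + 1) * uu M c Ls v L (i + 1) * (1 - epsn M c Ls v L (i + 1))) else 0)"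

definition Sigma_mat :: "nat \<Rightarrow> complex mat" where
  "Sigma_mat N = four_block_mat (1\<^sub>m N) (0\<^sub>m N N) (0\<^sub>m N N) (- 1\<^sub>m N)"

definition Gamma_mat :: "nat \<Rightarrow> complex mat" where
  "Gamma_mat N = four_block_mat (0\<^sub>m N N) (1\<^sub>m N) (1\<^sub>m N) (0\<^sub>m N N)"

definition R_mat :: "nat \<Rightarrow> nat \<Rightarrow> (nat \<Rightarrow> real) \<Rightarrow> real \<Rightarrow> real \<Rightarrow> real \<Rightarrow> complex mat" where
  "R_mat N M c Ls v L = Sigma_mat N -
     (let S = sigma_mat N M c Ls v L in four_block_mat S S S S)"

definition Omega_mat :: "nat \<Rightarrow> nat \<Rightarrow> (nat \<Rightarrow> real) \<Rightarrow> real \<Rightarrow> real \<Rightarrow> real \<Rightarrow> complex mat" where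
  "Omega_mat N M c Ls v L =
     four_block_mat (rho_mat N M c Ls v L) (xi_mat N M c Ls v L) (xi_mat N M c Ls v L) (rho_mat N M c Ls v L)"

definition inv_mat :: "complex mat \<Rightarrow> complex mat" where
  "inv_mat A = (SOME B. inverts_mat A B \<and> inverts_mat B A)"

definition D_mat :: "nat \<Rightarrow> nat \<Rightarrow> (nat \<Rightarrow> real) \<Rightarrow> real \<Rightarrow> real \<Rightarrow> real \<Rightarrow> complex mat" where
  "D_mat N M c Ls v L = inv_mat (R_mat N M c Ls v L) * Omega_mat N M c Ls v L"

definition R_inner :: "complex mat \<Rightarrow> complex vec \<Rightarrow> complex vec \<Rightarrow> complex" where
  "R_inner R x y = conjugate x \<bullet> (R *\<^sub>v y)"

end

theory Submission
  imports Defs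
begin


definition sw :: "nat \<Rightarrow> nat \<Rightarrow> nat" where
  "sw N i = (if i < N then i + N else i - N)"

lemma sw_lt: "i < N + N \<Longrightarrow> sw N i < N + N" unfolding sw_def by auto
lemma sw_sw: "i < N + N \<Longrightarrow> sw N (sw N i) = i" unfolding sw_def by auto
lemma sw_bij: "bij_betw (sw N) {0..<N+N} {0..<N+N}"
  by (rule bij_betw_byWitness[where f'="sw N"]) (auto simp: sw_sw sw_lt)

lemma Gamma_eq: "Gamma_mat N = mat (N+N) (N+N) (\<lambda>(i,j). if j = sw N i then 1 else 0)"
  unfolding Gamma_mat_def by (rule eq_matI) (auto simp: sw_def)

lemma Gamma_carrier: "Gamma_mat N \<in> carrier_mat (N+N) (N+N)"
  unfolding Gamma_eq by simp

lemma G_mult_left: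
  assumes "A \<in> carrier_mat (N+N) m" "i < N+N" "j < m"
  shows "(Gamma_mat N * A) $$ (i,j) = A $$ (sw N i, j)"
proof -
  have "(Gamma_mat N * A) $$ (i,j) = (\<Sum>k\<in>{0..<N+N}. (if k = sw N i then 1 else 0) * A $$ (k,j))"
    using assms unfolding Gamma_eq by (simp add: scalar_prod_def)
  also have "\<dots> = (\<Sum>k\<in>{0..<N+N}. if k = sw N i then A $$ (k,j) else 0)"
    by (rule sum.cong) auto
  also have "\<dots> = A $$ (sw N i, j)" using sw_lt[OF assms(2)] by simp
  finally show ?thesis .
qed

lemma G_mult_right:
  assumes "A \<in> carrier_mat m (N+N)" "i < m" "j < N+N"
  shows "(A * Gamma_mat N) $$ (i,j) = A $$ (i, sw N j)"
proof -
  have "(A * Gamma_mat N) $$ (i,j) = (\<Sum>k\<in>{0..<N+N}. A $$ (i,k) * (if j = sw N k then 1 else 0))"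
    using assms unfolding Gamma_eq by (simp add: scalar_prod_def)
  also have "\<dots> = (\<Sum>k\<in>{0..<N+N}. if k = sw N j then A $$ (i,k) else 0)"
    by (rule sum.cong) (auto simp: sw_sw sw_lt assms)
  also have "\<dots> = A $$ (i, sw N j)" using sw_lt[OF assms(3)] by simp
  finally show ?thesis .
qed

lemma G_mult_vec:
  assumes "x \<in> carrier_vec (N+N)" "i < N+N"
  shows "(Gamma_mat N *\<^sub>v x) $ i = x $ (sw N i)"
proof -
  have "(Gamma_mat N *\<^sub>v x) $ i = (\<Sum>k\<in>{0..<N+N}. (if k = sw N i then 1 else 0) * x $ k)"
    using assms unfolding Gamma_eq by (simp add: scalar_prod_def)
  also have "\<dots> = (\<Sum>k\<in>{0..<N+N}. if k = sw N i then x $ k else 0)"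
    by (rule sum.cong) auto
  also have "\<dots> = x $ (sw N i)" using sw_lt[OF assms(2)] by simp
  finally show ?thesis .
qed

lemma sigma_props:
  assumes "p < N" "q < N"
  shows "sigma_mat N M c Ls v L $$ (q,p) = - sigma_mat N M c Ls v L $$ (p,q)"
    "cnj (sigma_mat N M c Ls v L $$ (p,q)) = - sigma_mat N M c Ls v L $$ (p,q)"
proof -
  let ?u = "uu M c Ls v L"
  have e: "\<And>p q. p < N \<Longrightarrow> q < N \<Longrightarrow> sigma_mat N M c Ls v L $$ (p,q) =
     \<i> * complex_of_real (if p = q then 0 else 2 * v * sqrt (real (p+1) * real (q+1)) * (1 - (-1) ^ (p+1 + (q+1)))
        / (pi * sqrt (?u (p+1) * ?u (q+1)) * (real (q+1) ^ 2 - real (p+1) ^ 2)))"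
    unfolding sigma_mat_def by (auto simp: Let_def)
  have s: "(if q = p then 0 else 2 * v * sqrt (real (q+1) * real (p+1)) * (1 - (-1) ^ (q+1 + (p+1)))
        / (pi * sqrt (?u (q+1) * ?u (p+1)) * (real (p+1) ^ 2 - real (q+1) ^ 2)))
     = - (if p = q then 0 else 2 * v * sqrt (real (p+1) * real (q+1)) * (1 - (-1) ^ (p+1 + (q+1)))
        / (pi * sqrt (?u (p+1) * ?u (q+1)) * (real (q+1) ^ 2 - real (p+1) ^ 2)))"
  proof -
    have g: "\<And>x a b y::real. x / ((a - b) * y) = - (x / ((b - a) * y))"
      by (metis minus_diff_eq mult_minus_left divide_minus_right)
    show ?thesis by (simp add: mult.commute add.commute g[of _ "(1 + real p)^2"])
  qed
  show "sigma_mat N M c Ls v L $$ (q,p) = - sigma_mat N M c Ls v L $$ (p,q)"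
    using e[OF assms] e[OF assms(2,1)] s by simp
  show "cnj (sigma_mat N M c Ls v L $$ (p,q)) = - sigma_mat N M c Ls v L $$ (p,q)"
    using e[OF assms] by simp
qed

lemma sigma_carrier: "sigma_mat N M c Ls v L \<in> carrier_mat N N"
  unfolding sigma_mat_def by simp

lemma R_carrier: "R_mat N M c Ls v L \<in> carrier_mat (N+N) (N+N)"
proof -
  have "Sigma_mat N \<in> carrier_mat (N+N) (N+N)" unfolding Sigma_mat_def
    by (rule four_block_carrier_mat) auto
  moreover have "four_block_mat (sigma_mat N M c Ls v L) (sigma_mat N M c Ls v L)
     (sigma_mat N M c Ls v L) (sigma_mat N M c Ls v L) \<in> carrier_mat (N+N) (N+N)"
    by (rule four_block_carrier_mat) (rule sigma_carrier)+
  ultimately show ?thesis unfolding R_mat_def Let_def using minus_carrier_mat by blast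
qed

lemma Omega_carrier: "Omega_mat N M c Ls v L \<in> carrier_mat (N+N) (N+N)"
  unfolding Omega_mat_def by (rule four_block_carrier_mat) (simp_all add: rho_mat_def)

definition md :: "nat \<Rightarrow> nat \<Rightarrow> nat" where
  "md N i = (if i < N then i else i - N)"

lemma R_entry:
  assumes "i < N+N" "j < N+N"
  shows "R_mat N M c Ls v L $$ (i,j) = (if i = j then (if i < N then 1 else -1) else 0)
     - sigma_mat N M c Ls v L $$ (md N i, md N j)"
proof -
  have d: "dim_row (sigma_mat N M c Ls v L) = N" "dim_col (sigma_mat N M c Ls v L) = N"
    by (simp_all add: sigma_mat_def)
  show ?thesis
    using assms unfolding R_mat_def Sigma_mat_def md_def Let_def
    by (cases "i<N"; cases "j<N") (auto simp add: d)
qed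

lemma md_lt: "i < N + N \<Longrightarrow> md N i < N" unfolding md_def by auto
lemma md_sw: "i < N + N \<Longrightarrow> md N (sw N i) = md N i" unfolding md_def sw_def by auto

lemma R1:
  assumes "i < N+N" "j < N+N"
  shows "R_mat N M c Ls v L $$ (sw N i, sw N j) = - cnj (R_mat N M c Ls v L $$ (i,j))"
  using assms sigma_props(2)[OF md_lt[OF assms(1)] md_lt[OF assms(2)], of M c Ls v L]
  by (simp add: R_entry sw_lt md_sw) (auto simp: sw_def)

lemma R2:
  assumes "i < N+N" "j < N+N"
  shows "R_mat N M c Ls v L $$ (i, sw N j) = - R_mat N M c Ls v L $$ (j, sw N i)"
  using assms sigma_props(1)[OF md_lt[OF assms(1)] md_lt[OF assms(2)], of M c Ls v L]
  by (simp add: R_entry sw_lt md_sw) (auto simp: sw_def)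

lemma Om1:
  assumes "i < N+N" "j < N+N"
  shows "Omega_mat N M c Ls v L $$ (sw N i, j) = Omega_mat N M c Ls v L $$ (i, sw N j)"
  using assms unfolding Omega_mat_def
  by (cases "i<N"; cases "j<N") (simp_all add: sw_def rho_mat_def xi_mat_def)

lemma Om2:
  assumes "i < N+N" "j < N+N"
  shows "cnj (Omega_mat N M c Ls v L $$ (i, j)) = Omega_mat N M c Ls v L $$ (i, j)"
  using assms unfolding Omega_mat_def rho_mat_def xi_mat_def by auto

lemma conj_mv:
  assumes "A \<in> carrier_mat n m" "x \<in> carrier_vec m"
  shows "conjugate (A *\<^sub>v x) = map_mat cnj A *\<^sub>v conjugate x"
  using assms by (intro eq_vecI) (auto simp: scalar_prod_def cnj_sum)

lemma mv_uminus:
  fixes A :: "complex mat"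
  assumes "A \<in> carrier_mat n m" "x \<in> carrier_vec m"
  shows "A *\<^sub>v (- x) = - (A *\<^sub>v x)"
  using assms by (intro eq_vecI) (auto simp: scalar_prod_def sum_negf)

lemma eig_generic:
  fixes R Om Di G :: "complex mat"
  assumes C: "R \<in> carrier_mat n n" "Om \<in> carrier_mat n n" "Di \<in> carrier_mat n n" "G \<in> carrier_mat n n"
    and inv: "R * Di = 1\<^sub>m n" "Di * R = 1\<^sub>m n"
    and cR: "map_mat cnj R = - (G * R * G)" and cO: "map_mat cnj Om = Om" and OG: "Om * G = G * Om"
    and GG: "\<And>x. x \<in> carrier_vec n \<Longrightarrow> G *\<^sub>v (G *\<^sub>v x) = x"
    and a: "a \<in> carrier_vec n" and ev: "(Di * Om) *\<^sub>v a = \<mu> \<cdot>\<^sub>v a"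
  shows "(Di * Om) *\<^sub>v (G *\<^sub>v conjugate a) = (- cnj \<mu>) \<cdot>\<^sub>v (G *\<^sub>v conjugate a)"
proof -
  define ca where "ca = conjugate a"
  have ca: "ca \<in> carrier_vec n" using a unfolding ca_def by simp
  define a' where "a' = G *\<^sub>v ca"
  have a': "a' \<in> carrier_vec n" using C ca unfolding a'_def by simp
  have 1: "Om *\<^sub>v a = \<mu> \<cdot>\<^sub>v (R *\<^sub>v a)"
  proof -
    have "Om *\<^sub>v a = ((R * Di) * Om) *\<^sub>v a" using inv C a by simp
    also have "\<dots> = R *\<^sub>v (Di *\<^sub>v (Om *\<^sub>v a))" using C a
      using assoc_mult_mat_vec[of R n n "Di * Om" n a] assoc_mult_mat_vec[of Di n n Om n a]
        assoc_mult_mat[of R n n Di n Om n] by simp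
    also have "\<dots> = \<mu> \<cdot>\<^sub>v (R *\<^sub>v a)" using ev C a by (simp add: mult_mat_vec)
    finally show ?thesis .
  qed
  have 2: "Om *\<^sub>v ca = cnj \<mu> \<cdot>\<^sub>v (map_mat cnj R *\<^sub>v ca)"
  proof -
    have "conjugate (Om *\<^sub>v a) = conjugate (\<mu> \<cdot>\<^sub>v (R *\<^sub>v a))" using 1 by simp
    then show ?thesis using conj_mv[OF C(2) a] conj_mv[OF C(1) a] cO
      by (simp add: conjugate_smult_vec ca_def)
  qed
  have 3: "map_mat cnj R *\<^sub>v ca = - (G *\<^sub>v (R *\<^sub>v a'))"
    unfolding cR a'_def using C ca assoc_mult_mat_vec[of G n n "R * G" n ca]
      assoc_mult_mat_vec[of R n n G n ca] assoc_mult_mat[of G n n R n G n] by simp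
  have 4: "Om *\<^sub>v a' = G *\<^sub>v (Om *\<^sub>v ca)"
    unfolding a'_def using C ca assoc_mult_mat_vec[of Om n n G n ca]
      assoc_mult_mat_vec[of G n n Om n ca] OG by simp
  have 5: "Om *\<^sub>v a' = (- cnj \<mu>) \<cdot>\<^sub>v (R *\<^sub>v a')"
  proof -
    have "Om *\<^sub>v a' = G *\<^sub>v (cnj \<mu> \<cdot>\<^sub>v (- (G *\<^sub>v (R *\<^sub>v a'))))" using 4 2 3 by simp
    also have "\<dots> = cnj \<mu> \<cdot>\<^sub>v (- (G *\<^sub>v (G *\<^sub>v (R *\<^sub>v a'))))"
      using C a' by (simp add: mult_mat_vec mv_uminus[of G n n])
    also have "\<dots> = (- cnj \<mu>) \<cdot>\<^sub>v (R *\<^sub>v a')"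
      using GG[of "R *\<^sub>v a'"] C a' by (intro eq_vecI) auto
    finally show ?thesis .
  qed
  have "(Di * Om) *\<^sub>v a' = Di *\<^sub>v (Om *\<^sub>v a')" using C a' assoc_mult_mat_vec[of Di n n Om n a'] by simp
  also have "\<dots> = (- cnj \<mu>) \<cdot>\<^sub>v (Di *\<^sub>v (R *\<^sub>v a'))" using 5 C a' by (simp add: mult_mat_vec)
  also have "\<dots> = (- cnj \<mu>) \<cdot>\<^sub>v a'" using C a' inv
      assoc_mult_mat_vec[of Di n n R n a'] by simp
  finally show ?thesis unfolding a'_def ca_def .
qed


lemma G_dims: "dim_row (Gamma_mat N) = N+N" "dim_col (Gamma_mat N) = N+N"
  using Gamma_carrier[of N] by auto

lemma G_zero: "Gamma_mat N *\<^sub>v 0\<^sub>v (N+N) = 0\<^sub>v (N+N)"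
proof (rule eq_vecI)
  fix i assume "i < dim_vec (0\<^sub>v (N+N) :: complex vec)"
  then have i: "i < N+N" by simp
  have z: "(0\<^sub>v (N+N) :: complex vec) \<in> carrier_vec (N+N)" by simp
  show "(Gamma_mat N *\<^sub>v 0\<^sub>v (N+N)) $ i = 0\<^sub>v (N+N) $ i"
    by (simp only: G_mult_vec[OF z i]) (simp add: i sw_lt)
qed (simp add: G_dims)

lemma GG_vec: "x \<in> carrier_vec (N+N) \<Longrightarrow> Gamma_mat N *\<^sub>v (Gamma_mat N *\<^sub>v x) = x"
proof (rule eq_vecI)
  assume x: "x \<in> carrier_vec (N+N)"
  have Gx: "Gamma_mat N *\<^sub>v x \<in> carrier_vec (N+N)" using x Gamma_carrier[of N] by simp
  fix i assume "i < dim_vec x"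
  then have i: "i < N+N" using x by simp
  show "(Gamma_mat N *\<^sub>v (Gamma_mat N *\<^sub>v x)) $ i = x $ i"
    by (simp only: G_mult_vec[OF Gx i] G_mult_vec[OF x sw_lt[OF i]] sw_sw[OF i])
qed (simp add: G_dims)

lemma cR_eq: "map_mat cnj (R_mat N M c Ls v L) = - (Gamma_mat N * R_mat N M c Ls v L * Gamma_mat N)"
proof -
  have GR: "Gamma_mat N * R_mat N M c Ls v L \<in> carrier_mat (N+N) (N+N)"
    using Gamma_carrier R_carrier by (rule mult_carrier_mat)
  have GRG: "Gamma_mat N * R_mat N M c Ls v L * Gamma_mat N \<in> carrier_mat (N+N) (N+N)"
    using GR Gamma_carrier by (rule mult_carrier_mat)
  show ?thesis
  proof (rule eq_matI)
    fix i j assume "i < dim_row (- (Gamma_mat N * R_mat N M c Ls v L * Gamma_mat N))"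
      "j < dim_col (- (Gamma_mat N * R_mat N M c Ls v L * Gamma_mat N))"
    then have i: "i < N+N" and j: "j < N+N" using GRG by auto
    have "(Gamma_mat N * R_mat N M c Ls v L * Gamma_mat N) $$ (i,j) = R_mat N M c Ls v L $$ (sw N i, sw N j)"
      by (simp only: G_mult_right[OF GR i j] G_mult_left[OF R_carrier i sw_lt[OF j]])
    also have "\<dots> = - cnj (R_mat N M c Ls v L $$ (i, j))" by (rule R1[OF i j])
    finally have e: "(Gamma_mat N * R_mat N M c Ls v L * Gamma_mat N) $$ (i,j) = - cnj (R_mat N M c Ls v L $$ (i, j))" .
    have u: "(- (Gamma_mat N * R_mat N M c Ls v L * Gamma_mat N)) $$ (i,j) = - ((Gamma_mat N * R_mat N M c Ls v L * Gamma_mat N) $$ (i,j))"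
      by (rule index_uminus_mat(1)) (use GRG i j in auto)
    have m: "map_mat cnj (R_mat N M c Ls v L) $$ (i, j) = cnj (R_mat N M c Ls v L $$ (i, j))"
      by (rule index_map_mat(1)) (use R_carrier[of N M c Ls v L] i j in auto)
    show "map_mat cnj (R_mat N M c Ls v L) $$ (i, j) = (- (Gamma_mat N * R_mat N M c Ls v L * Gamma_mat N)) $$ (i, j)"
      by (simp only: u m e) simp
  qed (use GRG R_carrier[of N M c Ls v L] in auto)
qed

lemma cO_eq: "map_mat cnj (Omega_mat N M c Ls v L) = Omega_mat N M c Ls v L"
  using Omega_carrier[of N M c Ls v L]
  by (intro eq_matI) (auto simp: Om2)

lemma OG_eq: "Omega_mat N M c Ls v L * Gamma_mat N = Gamma_mat N * Omega_mat N M c Ls v L"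
proof (rule eq_matI)
  fix i j assume "i < dim_row (Gamma_mat N * Omega_mat N M c Ls v L)"
      "j < dim_col (Gamma_mat N * Omega_mat N M c Ls v L)"
  then have i: "i < N+N" and j: "j < N+N" using Omega_carrier[of N M c Ls v L] by (auto simp: G_dims)
  show "(Omega_mat N M c Ls v L * Gamma_mat N) $$ (i,j) = (Gamma_mat N * Omega_mat N M c Ls v L) $$ (i,j)"
    by (simp only: G_mult_right[OF Omega_carrier i j] G_mult_left[OF Omega_carrier i j] Om1[OF i j])
qed (use Omega_carrier[of N M c Ls v L] in \<open>auto simp: G_dims\<close>)

lemma RI:
  assumes "R \<in> carrier_mat n n" "x \<in> carrier_vec n" "y \<in> carrier_vec n"
  shows "R_inner R x y = (\<Sum>i\<in>{0..<n}. \<Sum>j\<in>{0..<n}. cnj (x $ i) * R $$ (i,j) * y $ j)"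
  using assms unfolding R_inner_def scalar_prod_def
  by (auto simp: scalar_prod_def sum_distrib_left mult.assoc intro!: sum.cong)

lemma Gc_entry:
  assumes "a \<in> carrier_vec (N+N)" "i < N+N"
  shows "(Gamma_mat N *\<^sub>v conjugate a) $ i = cnj (a $ (sw N i))"
proof -
  have "conjugate a \<in> carrier_vec (N+N)" using assms by simp
  then show ?thesis using assms sw_lt[OF assms(2)]
    by (simp only: G_mult_vec) simp
qed

lemma RX: "(\<Sum>i\<in>{0..<N+N}. f (sw N i)) = (\<Sum>i\<in>{0..<N+N}. f i)"
  by (rule sum.reindex_bij_betw[OF sw_bij])

lemma inner1:
  fixes N M :: nat and c :: "nat \<Rightarrow> real" and Ls v L :: real
  assumes a: "a \<in> carrier_vec (N+N)" and b: "b \<in> carrier_vec (N+N)"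
  defines "R \<equiv> R_mat N M c Ls v L"
  shows "cnj (R_inner R a b) = - R_inner R (Gamma_mat N *\<^sub>v conjugate a) (Gamma_mat N *\<^sub>v conjugate b)"
proof -
  have RC: "R \<in> carrier_mat (N+N) (N+N)" unfolding R_def by (rule R_carrier)
  have ca: "Gamma_mat N *\<^sub>v conjugate a \<in> carrier_vec (N+N)" using a Gamma_carrier[of N] by simp
  have cb: "Gamma_mat N *\<^sub>v conjugate b \<in> carrier_vec (N+N)" using b Gamma_carrier[of N] by simp
  have "R_inner R (Gamma_mat N *\<^sub>v conjugate a) (Gamma_mat N *\<^sub>v conjugate b)
     = (\<Sum>i\<in>{0..<N+N}. \<Sum>j\<in>{0..<N+N}. a $ (sw N i) * R $$ (i,j) * cnj (b $ (sw N j)))"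
    using a b unfolding RI[OF RC ca cb]
    by (auto simp: Gc_entry simp del: index_mult_mat_vec intro!: sum.cong)
  also have "\<dots> = (\<Sum>i\<in>{0..<N+N}. \<Sum>j\<in>{0..<N+N}. a $ (sw N i) * R $$ (sw N (sw N i), sw N (sw N j)) * cnj (b $ (sw N j)))"
    by (auto simp: sw_sw intro!: sum.cong)
  also have "\<dots> = (\<Sum>i\<in>{0..<N+N}. \<Sum>j\<in>{0..<N+N}. a $ i * R $$ (sw N i, sw N j) * cnj (b $ j))"
    by (subst RX[where f = "\<lambda>i. \<Sum>j\<in>{0..<N+N}. a $ i * R $$ (sw N i, sw N (sw N j)) * cnj (b $ (sw N j))"])
       (subst RX, rule refl)
  also have "\<dots> = (\<Sum>i\<in>{0..<N+N}. \<Sum>j\<in>{0..<N+N}. - (a $ i * cnj (R $$ (i, j)) * cnj (b $ j)))"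
    unfolding R_def by (auto simp: R1 intro!: sum.cong)
  also have "\<dots> = - cnj (R_inner R a b)"
    unfolding RI[OF RC a b] by (simp add: sum_negf cnj_sum mult.commute mult.left_commute)
  finally show ?thesis by simp
qed

lemma inner2_aux:
  assumes x: "x \<in> carrier_vec (N+N)" and y: "y \<in> carrier_vec (N+N)"
    and RC: "R \<in> carrier_mat (N+N) (N+N)"
  shows "R_inner R x (Gamma_mat N *\<^sub>v conjugate y)
     = (\<Sum>i\<in>{0..<N+N}. \<Sum>j\<in>{0..<N+N}. cnj (x $ i) * R $$ (i, sw N j) * cnj (y $ j))"
proof -
  have cy: "Gamma_mat N *\<^sub>v conjugate y \<in> carrier_vec (N+N)" using y Gamma_carrier[of N] by simp
  have "R_inner R x (Gamma_mat N *\<^sub>v conjugate y)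
     = (\<Sum>i\<in>{0..<N+N}. \<Sum>j\<in>{0..<N+N}. cnj (x $ i) * R $$ (i, sw N (sw N j)) * cnj (y $ (sw N j)))"
    using x y unfolding RI[OF RC x cy]
    by (auto simp: Gc_entry sw_lt sw_sw simp del: index_mult_mat_vec intro!: sum.cong)
  also have "\<dots> = (\<Sum>i\<in>{0..<N+N}. \<Sum>j\<in>{0..<N+N}. cnj (x $ i) * R $$ (i, sw N j) * cnj (y $ j))"
    by (rule sum.cong[OF refl]) (rule RX)
  finally show ?thesis .
qed

lemma inner2:
  fixes N M :: nat and c :: "nat \<Rightarrow> real" and Ls v L :: real
  assumes a: "a \<in> carrier_vec (N+N)" and b: "b \<in> carrier_vec (N+N)"
  defines "R \<equiv> R_mat N M c Ls v L"
  shows "R_inner R a (Gamma_mat N *\<^sub>v conjugate b) = - R_inner R b (Gamma_mat N *\<^sub>v conjugate a)"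
proof -
  have RC: "R \<in> carrier_mat (N+N) (N+N)" unfolding R_def by (rule R_carrier)
  have "R_inner R b (Gamma_mat N *\<^sub>v conjugate a)
     = (\<Sum>i\<in>{0..<N+N}. \<Sum>j\<in>{0..<N+N}. cnj (b $ i) * R $$ (i, sw N j) * cnj (a $ j))"
    by (rule inner2_aux[OF b a RC])
  also have "\<dots> = (\<Sum>j\<in>{0..<N+N}. \<Sum>i\<in>{0..<N+N}. cnj (b $ i) * R $$ (i, sw N j) * cnj (a $ j))"
    by (rule sum.swap)
  also have "\<dots> = (\<Sum>j\<in>{0..<N+N}. \<Sum>i\<in>{0..<N+N}. - (cnj (a $ j) * R $$ (j, sw N i) * cnj (b $ i)))"
  proof (intro sum.cong refl)
    fix j i assume j: "j \<in> {0..<N+N}" and i: "i \<in> {0..<N+N}"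
    have "R $$ (i, sw N j) = - R $$ (j, sw N i)" unfolding R_def
      by (rule R2) (use i j in auto)
    then show "cnj (b $ i) * R $$ (i, sw N j) * cnj (a $ j) = - (cnj (a $ j) * R $$ (j, sw N i) * cnj (b $ i))"
      by simp
  qed
  also have "\<dots> = - R_inner R a (Gamma_mat N *\<^sub>v conjugate b)"
    unfolding inner2_aux[OF a b RC] by (simp add: sum_negf)
  finally show ?thesis by simp
qed

lemma inv_facts:
  assumes "invertible_mat R" "R \<in> carrier_mat n n"
  shows "inv_mat R \<in> carrier_mat n n" "R * inv_mat R = 1\<^sub>m n" "inv_mat R * R = 1\<^sub>m n"
proof -
  have "\<exists>B. inverts_mat R B \<and> inverts_mat B R" using assms(1) unfolding invertible_mat_def by blast
  then have h: "inverts_mat R (inv_mat R) \<and> inverts_mat (inv_mat R) R"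
    unfolding inv_mat_def by (rule someI_ex)
  then have h1: "R * inv_mat R = 1\<^sub>m n" and h2: "inv_mat R * R = 1\<^sub>m (dim_row (inv_mat R))"
    using assms(2) unfolding inverts_mat_def by auto
  have "dim_col (inv_mat R * R) = n" using assms(2) by simp
  then have r: "dim_row (inv_mat R) = n" using h2 by simp
  have "dim_col (R * inv_mat R) = n" using h1 by simp
  then have c: "dim_col (inv_mat R) = n" by simp
  show "inv_mat R \<in> carrier_mat n n" using r c by auto
  show "R * inv_mat R = 1\<^sub>m n" by (rule h1)
  show "inv_mat R * R = 1\<^sub>m n" using h2 r by simp
qed

theorem lemma2:
  fixes N M :: nat and v L Ls :: real and c :: "nat \<Rightarrow> real"
  assumes "N \<ge> 1" and "\<bar>v\<bar> < 1" and "L > 0" and "Ls \<ge> 0" and "M \<ge> 1" and "c 1 = 1"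
    and "\<forall>n \<in> {1..N}. (Fdisp M c Ls (kn L n))\<^sup>2 \<noteq> v\<^sup>2 * (kn L n)\<^sup>2"
    and "invertible_mat (R_mat N M c Ls v L)"
  shows "(\<forall>a \<mu>. eigenvector (D_mat N M c Ls v L) a \<mu> \<longrightarrow>
            eigenvector (D_mat N M c Ls v L) (Gamma_mat N *\<^sub>v conjugate a) (- cnj \<mu>))
       \<and> (\<forall>a b \<mu> \<nu>. eigenvector (D_mat N M c Ls v L) a \<mu> \<longrightarrow> eigenvector (D_mat N M c Ls v L) b \<nu> \<longrightarrow>
            (let R = R_mat N M c Ls v L; a' = Gamma_mat N *\<^sub>v conjugate a; b' = Gamma_mat N *\<^sub>v conjugate b in
              cnj (R_inner R a b) = - R_inner R a' b' \<and> R_inner R a b' = - R_inner R b a'))"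
  proof -
  let ?R = "R_mat N M c Ls v L"
  let ?O = "Omega_mat N M c Ls v L"
  let ?G = "Gamma_mat N"
  let ?Di = "inv_mat ?R"
  have RC: "?R \<in> carrier_mat (N+N) (N+N)" by (rule R_carrier)
  note IF = inv_facts[OF assms(8) RC]
  have DC: "D_mat N M c Ls v L \<in> carrier_mat (N+N) (N+N)"
    unfolding D_mat_def using IF(1) Omega_carrier by (rule mult_carrier_mat)
  have P1: "eigenvector (D_mat N M c Ls v L) (?G *\<^sub>v conjugate a) (- cnj \<mu>)"
    if ev: "eigenvector (D_mat N M c Ls v L) a \<mu>" for a \<mu>
  proof -
    have a: "a \<in> carrier_vec (N+N)" and a0: "a \<noteq> 0\<^sub>v (N+N)"
      and e: "D_mat N M c Ls v L *\<^sub>v a = \<mu> \<cdot>\<^sub>v a"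
      using ev DC unfolding eigenvector_def by auto
    have a': "?G *\<^sub>v conjugate a \<in> carrier_vec (N+N)" using a Gamma_carrier[of N] by simp
    have nz: "?G *\<^sub>v conjugate a \<noteq> 0\<^sub>v (N+N)"
    proof
      assume "?G *\<^sub>v conjugate a = 0\<^sub>v (N+N)"
      then have "conjugate a = 0\<^sub>v (N+N)" using GG_vec[of "conjugate a" N] a G_zero[of N] by simp
      then show False using a0 by simp
    qed
    have "D_mat N M c Ls v L *\<^sub>v (?G *\<^sub>v conjugate a) = (- cnj \<mu>) \<cdot>\<^sub>v (?G *\<^sub>v conjugate a)"
      unfolding D_mat_def
      by (rule eig_generic[OF RC Omega_carrier IF(1) Gamma_carrier IF(2) IF(3) cR_eq cO_eq OG_eq _ a])
         (erule GG_vec, rule e[unfolded D_mat_def])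
    then show ?thesis using a' nz DC unfolding eigenvector_def by auto
  qed
  have P2: "cnj (R_inner ?R a b) = - R_inner ?R (?G *\<^sub>v conjugate a) (?G *\<^sub>v conjugate b) \<and>
      R_inner ?R a (?G *\<^sub>v conjugate b) = - R_inner ?R b (?G *\<^sub>v conjugate a)"
    if "eigenvector (D_mat N M c Ls v L) a \<mu>" "eigenvector (D_mat N M c Ls v L) b \<nu>" for a b \<mu> \<nu>
  proof -
    have a: "a \<in> carrier_vec (N+N)" and b: "b \<in> carrier_vec (N+N)"
      using that DC unfolding eigenvector_def by auto
    show ?thesis using inner1[OF a b] inner2[OF a b] by blast
  qed
  show ?thesis unfolding Let_def using P1 P2 by blast
qed

end
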